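(* Let $P$ be a $\Sigma$-repeatable online minimization problem and let $c$ be a constant. Suppose that for every $\varepsilon>0$ and every $\alpha$ there exists an input distribution $p_{\alpha,\varepsilon}$ over $P$-inputs with finite support such that $\mathbb{E}_{\sigma\sim p_{\alpha,\varepsilon}}[D(\sigma)]\geq (c-\varepsilon)\,\mathbb{E}_{\sigma\sim p_{\alpha,\varepsilon}}[\mathrm{OPT}(\sigma)]+\alpha$ for every deterministic $P$-algorithm $D$ without advice. Then every randomized $P$-algorithm reading at most $o(n)$ bits of advice on inputs of length $n$ has a competitive ratio of at least $c$.
   Context: Online minimization problems and advice: an input is $\sigma=(s,x_1,\dots,x_n)$ consisting of an initial state $s$ (known before the first request, not counted as a request) and $n$ requests; $n$ is the length. A deterministic online algorithm with advice computes answers $y_1,\dots,y_n$, where $y_i$ is computed from the content $\varphi$ of an infinite advice tape (prepared by an oracle that knows the whole input), $s$ and $x_1,\dots,x_i$; each $y_i$ must lie in a nonempty set of valid answers. Its advice complexity $b(n)$ is the largest number of advice bits read over all inputs of length at most $n$. $\mathrm{ALG}(\sigma)$ denotes the non-negative real cost of the output, $\mathrm{OPT}(\sigma)$ the optimal offline cost. A randomized algorithm with advice complexity $b(n)$ is a probability distribution over deterministic algorithms with advice complexity at most $b(n)$. An algorithm $R$ is $c$-competitive if there is a constant $\alpha$ (not depending on the input, including its initial state) with $\mathbb{E}[R(\sigma)]\leq c\,\mathrm{OPT}(\sigma)+\alpha$ for all inputs $\sigma$; "competitive ratio at least $c$" means it is not $c'$-competitive for any $c'<c$. Repeated problem: for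 $P$-inputs $\sigma_1,\dots,\sigma_r$ with the same initial state $s$, $(\sigma_1;\dots;\sigma_r)$ is the sequence of all their requests concatenated, where the first request of each $\sigma_i$ is marked (it arrives together with $s$) so the algorithm knows when a new round starts. $P^*_\Sigma$ is the online problem whose inputs are all such sequences ($r\geq1$); an algorithm must output, for each round $i$, a valid sequence of $P$-answers $\gamma_i$ for $\sigma_i$ (it remembers all previous rounds), and the cost is $\sum_{i=1}^r \mathrm{cost}_P(\gamma_i,\sigma_i)$; $\mathrm{OPT}^*_\Sigma$ is its optimal offline algorithm. Let $I$, $I^*$ be the sets of inputs of $P$, $P^*_\Sigma$. $P$ is $\Sigma$-repeatable (with parameters $k_1,k_2,k_3\geq 0$) if every fixed $P$-input has only finitely many valid outputs and there is a map $g:I^*\to I$ such that for every $\sigma^*\in I^*$ with $r$ rounds: (1) $|g(\sigma^* )|\leq|\sigma^*|+k_1r$; (2) for every deterministic $P$-algorithm $\mathrm{ALG}$ there is a deterministic $P^*_\Sigma$-algorithm $\mathrm{ALG}^*$ with $\mathrm{ALG}^*(\sigma^* )\leq\mathrm{ALG}(g(\sigma^* ))+k_2r$ for all $\sigma^*$; (3) $\mathrm{OPT}^*_\Sigma(\sigma^* )\geq\mathrm{OPT}(g(\sigma^* ))-k_3r$. *)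

theory Defs
  imports "HOL-Probability.Probability" "HOL-Library.Landau_Symbols"
begin

text \<open>
  An online minimization problem P is given by
   I :: ('s \<times> 'x list) set       -- its inputs (initial state, list of requests),
   V :: input \<Rightarrow> nat \<Rightarrow> 'y set   -- the set of valid answers for the i-th request (0-based),
   C :: input \<Rightarrow> 'y list \<Rightarrow> real  -- the cost of an output on an input.
\<close>

type_synonym ('s, 'x) inp = "'s \<times> 'x list"

definition valid_out :: "(('s,'x) inp \<Rightarrow> nat \<Rightarrow> 'y set) \<Rightarrow> ('s,'x) inp \<Rightarrow> 'y list \<Rightarrow> bool" where
  "valid_out V \<sigma> ys \<longleftrightarrow> length ys = length (snd \<sigma>) \<and> (\<forall>i<length ys. ys ! i \<in> V \<sigma> i)"

definition online_problem ::
  "('s,'x) inp set \<Rightarrow> (('s,'x) inp \<Rightarrow> nat \<Rightarrow> 'y set) \<Rightarrow> (('s,'x) inp \<Rightarrow> 'y list \<Rightarrow> real) \<Rightarrow> bool" where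
  "online_problem I V C \<longleftrightarrow>
     (\<forall>\<sigma>\<in>I. \<forall>i<length (snd \<sigma>). V \<sigma> i \<noteq> {}) \<and>
     (\<forall>\<sigma>\<in>I. \<forall>ys. valid_out V \<sigma> ys \<longrightarrow> 0 \<le> C \<sigma> ys)"

definition OPT :: "(('s,'x) inp \<Rightarrow> nat \<Rightarrow> 'y set) \<Rightarrow> (('s,'x) inp \<Rightarrow> 'y list \<Rightarrow> real) \<Rightarrow> ('s,'x) inp \<Rightarrow> real" where
  "OPT V C \<sigma> = Inf {C \<sigma> ys | ys. valid_out V \<sigma> ys}"

text \<open>A deterministic online algorithm (without advice): the answer to the last request of the
  given prefix, computed from the initial state and the requests seen so far.\<close>
definition run_det :: "('s \<Rightarrow> 'x list \<Rightarrow> 'y) \<Rightarrow> ('s,'x) inp \<Rightarrow> 'y list" where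
  "run_det D \<sigma> = map (\<lambda>i. D (fst \<sigma>) (take (Suc i) (snd \<sigma>))) [0..<length (snd \<sigma>)]"

definition det_alg :: "('s,'x) inp set \<Rightarrow> (('s,'x) inp \<Rightarrow> nat \<Rightarrow> 'y set) \<Rightarrow> ('s \<Rightarrow> 'x list \<Rightarrow> 'y) \<Rightarrow> bool" where
  "det_alg I V D \<longleftrightarrow> (\<forall>\<sigma>\<in>I. valid_out V \<sigma> (run_det D \<sigma>))"

text \<open>A deterministic online algorithm with advice: answer function depending on the advice tape,
  number of advice bits read (sequentially, from the start of the tape) after processing a prefix,
  and the oracle preparing the tape from the whole input.\<close>
record ('s, 'x, 'y) adv_alg =
  ans :: "(nat \<Rightarrow> bool) \<Rightarrow> 's \<Rightarrow> 'x list \<Rightarrow> 'y"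
  rd  :: "(nat \<Rightarrow> bool) \<Rightarrow> 's \<Rightarrow> 'x list \<Rightarrow> nat"
  orc :: "('s,'x) inp \<Rightarrow> nat \<Rightarrow> bool"

definition run_adv :: "('s,'x,'y) adv_alg \<Rightarrow> ('s,'x) inp \<Rightarrow> 'y list" where
  "run_adv A \<sigma> = run_det (ans A (orc A \<sigma>)) \<sigma>"

definition bits_read :: "('s,'x,'y) adv_alg \<Rightarrow> ('s,'x) inp \<Rightarrow> nat" where
  "bits_read A \<sigma> = Max (insert 0
     {rd A (orc A \<sigma>) (fst \<sigma>) (take i (snd \<sigma>)) | i. 1 \<le> i \<and> i \<le> length (snd \<sigma>)})"

definition adv_alg :: "('s,'x) inp set \<Rightarrow> (('s,'x) inp \<Rightarrow> nat \<Rightarrow> 'y set) \<Rightarrow> (nat \<Rightarrow> nat)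
    \<Rightarrow> ('s,'x,'y) adv_alg \<Rightarrow> bool" where
  "adv_alg I V b A \<longleftrightarrow>
     (\<forall>\<phi>. det_alg I V (ans A \<phi>)) \<and>
     (\<forall>\<phi> \<phi>' s xs. (\<forall>k<rd A \<phi> s xs. \<phi> k = \<phi>' k) \<longrightarrow>
         ans A \<phi>' s xs = ans A \<phi> s xs \<and> rd A \<phi>' s xs = rd A \<phi> s xs) \<and>
     (\<forall>n. \<forall>\<sigma>\<in>I. length (snd \<sigma>) \<le> n \<longrightarrow> bits_read A \<sigma> \<le> b n)"

definition rand_alg :: "('s,'x) inp set \<Rightarrow> (('s,'x) inp \<Rightarrow> nat \<Rightarrow> 'y set) \<Rightarrow> (('s,'x) inp \<Rightarrow> 'y list \<Rightarrow> real)
    \<Rightarrow> (nat \<Rightarrow> nat) \<Rightarrow> ('s,'x,'y) adv_alg measure \<Rightarrow> bool" where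
  "rand_alg I V C b M \<longleftrightarrow>
     prob_space M \<and> space M \<subseteq> {A. adv_alg I V b A} \<and>
     (\<forall>\<sigma>\<in>I. (\<lambda>A. C \<sigma> (run_adv A \<sigma>)) \<in> borel_measurable M)"

definition exp_cost :: "(('s,'x) inp \<Rightarrow> 'y list \<Rightarrow> real) \<Rightarrow> ('s,'x,'y) adv_alg measure \<Rightarrow> ('s,'x) inp \<Rightarrow> ennreal" where
  "exp_cost C M \<sigma> = (\<integral>\<^sup>+ A. ennreal (C \<sigma> (run_adv A \<sigma>)) \<partial>M)"

definition competitive :: "('s,'x) inp set \<Rightarrow> (('s,'x) inp \<Rightarrow> nat \<Rightarrow> 'y set) \<Rightarrow> (('s,'x) inp \<Rightarrow> 'y list \<Rightarrow> real)
    \<Rightarrow> ('s,'x,'y) adv_alg measure \<Rightarrow> real \<Rightarrow> bool" where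
  "competitive I V C M c \<longleftrightarrow> (\<exists>\<alpha>::real. \<forall>\<sigma>\<in>I.
      0 \<le> c * OPT V C \<sigma> + \<alpha> \<and> exp_cost C M \<sigma> \<le> ennreal (c * OPT V C \<sigma> + \<alpha>))"

definition ratio_at_least :: "('s,'x) inp set \<Rightarrow> (('s,'x) inp \<Rightarrow> nat \<Rightarrow> 'y set) \<Rightarrow> (('s,'x) inp \<Rightarrow> 'y list \<Rightarrow> real)
    \<Rightarrow> ('s,'x,'y) adv_alg measure \<Rightarrow> real \<Rightarrow> bool" where
  "ratio_at_least I V C M c \<longleftrightarrow> (\<forall>c'<c. \<not> competitive I V C M c')"

text \<open>An input of the repeated problem: common initial state and the list of rounds
  (request lists of the P-inputs sigma_1, ..., sigma_r), r >= 1.\<close>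
definition I_star :: "('s,'x) inp set \<Rightarrow> ('s \<times> 'x list list) set" where
  "I_star I = {(s, xss). xss \<noteq> [] \<and> (\<forall>xs\<in>set xss. xs \<noteq> [] \<and> (s, xs) \<in> I)}"

definition len_star :: "'s \<times> 'x list list \<Rightarrow> nat" where
  "len_star \<sigma>s = sum_list (map length (snd \<sigma>s))"

text \<open>A deterministic algorithm for the repeated problem: answer from the initial state, the
  previous (complete) rounds and the current round's prefix.\<close>
definition run_star :: "('s \<Rightarrow> 'x list list \<Rightarrow> 'x list \<Rightarrow> 'y) \<Rightarrow> 's \<times> 'x list list \<Rightarrow> 'y list list" where
  "run_star D \<sigma>s = map (\<lambda>i. run_det (\<lambda>s xs. D s (take i (snd \<sigma>s)) xs) (fst \<sigma>s, snd \<sigma>s ! i))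
                       [0..<length (snd \<sigma>s)]"

definition valid_star :: "(('s,'x) inp \<Rightarrow> nat \<Rightarrow> 'y set) \<Rightarrow> 's \<times> 'x list list \<Rightarrow> 'y list list \<Rightarrow> bool" where
  "valid_star V \<sigma>s \<gamma>s \<longleftrightarrow> list_all2 (\<lambda>xs \<gamma>. valid_out V (fst \<sigma>s, xs) \<gamma>) (snd \<sigma>s) \<gamma>s"

definition det_alg_star :: "('s,'x) inp set \<Rightarrow> (('s,'x) inp \<Rightarrow> nat \<Rightarrow> 'y set)
    \<Rightarrow> ('s \<Rightarrow> 'x list list \<Rightarrow> 'x list \<Rightarrow> 'y) \<Rightarrow> bool" where
  "det_alg_star I V D \<longleftrightarrow> (\<forall>\<sigma>s\<in>I_star I. valid_star V \<sigma>s (run_star D \<sigma>s))"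

definition cost_star :: "(('s,'x) inp \<Rightarrow> 'y list \<Rightarrow> real) \<Rightarrow> 's \<times> 'x list list \<Rightarrow> 'y list list \<Rightarrow> real" where
  "cost_star C \<sigma>s \<gamma>s = (\<Sum>i<length (snd \<sigma>s). C (fst \<sigma>s, snd \<sigma>s ! i) (\<gamma>s ! i))"

definition OPT_star :: "(('s,'x) inp \<Rightarrow> nat \<Rightarrow> 'y set) \<Rightarrow> (('s,'x) inp \<Rightarrow> 'y list \<Rightarrow> real)
    \<Rightarrow> 's \<times> 'x list list \<Rightarrow> real" where
  "OPT_star V C \<sigma>s = Inf {cost_star C \<sigma>s \<gamma>s | \<gamma>s. valid_star V \<sigma>s \<gamma>s}"

definition repeatable :: "('s,'x) inp set \<Rightarrow> (('s,'x) inp \<Rightarrow> nat \<Rightarrow> 'y set) \<Rightarrow> (('s,'x) inp \<Rightarrow> 'y list \<Rightarrow> real) \<Rightarrow> bool" where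
  "repeatable I V C \<longleftrightarrow>
     (\<forall>\<sigma>\<in>I. finite {ys. valid_out V \<sigma> ys}) \<and>
     (\<exists>(k1::real) (k2::real) (k3::real) (g :: 's \<times> 'x list list \<Rightarrow> ('s,'x) inp).
        0 \<le> k1 \<and> 0 \<le> k2 \<and> 0 \<le> k3 \<and>
        (\<forall>\<sigma>s\<in>I_star I. g \<sigma>s \<in> I) \<and>
        (\<forall>\<sigma>s\<in>I_star I. real (length (snd (g \<sigma>s))) \<le> real (len_star \<sigma>s) + k1 * real (length (snd \<sigma>s))) \<and>
        (\<forall>D. det_alg I V D \<longrightarrow> (\<exists>Ds. det_alg_star I V Ds \<and>
            (\<forall>\<sigma>s\<in>I_star I. cost_star C \<sigma>s (run_star Ds \<sigma>s)
                 \<le> C (g \<sigma>s) (run_det D (g \<sigma>s)) + k2 * real (length (snd \<sigma>s))))) \<and>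
        (\<forall>\<sigma>s\<in>I_star I. OPT_star V C \<sigma>s \<ge> OPT V C (g \<sigma>s) - k3 * real (length (snd \<sigma>s))))"

end

theory Submission
  imports Defs
begin

lemma valid_exists:
  assumes "online_problem I V C" "\<sigma> \<in> I"
  shows "\<exists>ys. valid_out V \<sigma> ys"
proof -
  let ?ys = "map (\<lambda>i. SOME y. y \<in> V \<sigma> i) [0..<length (snd \<sigma>)]"
  have "valid_out V \<sigma> ?ys"
    unfolding valid_out_def using assms unfolding online_problem_def
    by (auto intro: someI_ex simp: ex_in_conv[symmetric])
  thus ?thesis by blast
qed

lemma OPT_facts:
  assumes "online_problem I V C" "\<sigma> \<in> I" "finite {ys. valid_out V \<sigma> ys}"
  shows "(\<exists>ys. valid_out V \<sigma> ys \<and> OPT V C \<sigma> = C \<sigma> ys)"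
    "\<And>ys. valid_out V \<sigma> ys \<Longrightarrow> OPT V C \<sigma> \<le> C \<sigma> ys"
    "0 \<le> OPT V C \<sigma>"
proof -
  have eq: "{C \<sigma> ys | ys. valid_out V \<sigma> ys} = C \<sigma> ` {ys. valid_out V \<sigma> ys}" by auto
  have fin: "finite {C \<sigma> ys | ys. valid_out V \<sigma> ys}" unfolding eq using assms(3) by simp
  have ne: "{C \<sigma> ys | ys. valid_out V \<sigma> ys} \<noteq> {}" using valid_exists[OF assms(1,2)] by auto
  have O: "OPT V C \<sigma> = Min {C \<sigma> ys | ys. valid_out V \<sigma> ys}"
    unfolding OPT_def by (rule cInf_eq_Min[OF fin ne])
  show "\<exists>ys. valid_out V \<sigma> ys \<and> OPT V C \<sigma> = C \<sigma> ys"
    using Min_in[OF fin ne] O by auto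
  show le: "\<And>ys. valid_out V \<sigma> ys \<Longrightarrow> OPT V C \<sigma> \<le> C \<sigma> ys"
    using O fin by (auto intro: Min_le)
  show "0 \<le> OPT V C \<sigma>"
    using Min_in[OF fin ne] O assms(1,2) unfolding online_problem_def by auto
qed

lemma valid_out_Nil: "snd \<sigma> = [] \<Longrightarrow> valid_out V \<sigma> ys \<longleftrightarrow> ys = []"
  unfolding valid_out_def by auto

lemma OPT_empty: "snd \<sigma> = [] \<Longrightarrow> OPT V C \<sigma> = C \<sigma> []"
  unfolding OPT_def using valid_out_Nil[of \<sigma> V] by simp

lemma run_det_Nil: "snd \<sigma> = [] \<Longrightarrow> run_det D \<sigma> = []"
  unfolding run_det_def by simp

lemma run_det_cong: "D (fst \<sigma>) = D' (fst \<sigma>) \<Longrightarrow> run_det D \<sigma> = run_det D' \<sigma>"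
  unfolding run_det_def by simp

lemma exp_neg_le: assumes "(t::real) \<ge> 0" shows "exp (-t) \<le> 1 - t + t^2/2"
proof -
  have a: "1 + t + t^2/2 \<le> exp t" by (rule exp_lower_Taylor_quadratic[OF assms])
  have p: "0 < 1 + t + t^2/2" using assms by (simp add: add_pos_nonneg)
  have "(1 - t + t^2/2) * (1 + t + t^2/2) = 1 + t^4/4" by (simp add: algebra_simps power2_eq_square power4_eq_xxxx)
  hence b: "1 \<le> (1 - t + t^2/2) * (1 + t + t^2/2)" by simp
  have "exp (-t) = 1 / exp t" by (simp add: exp_minus field_simps)
  also have "\<dots> \<le> 1 / (1 + t + t^2/2)" using a p by (intro divide_left_mono) auto
  also have "\<dots> \<le> 1 - t + t^2/2" using b p by (simp add: divide_le_eq)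
  finally show ?thesis .
qed

definition Lr :: "'a set \<Rightarrow> nat \<Rightarrow> 'a list set" where
  "Lr X r = {xss. set xss \<subseteq> X \<and> length xss = r}"

definition ExW :: "'a set \<Rightarrow> ('a \<Rightarrow> real) \<Rightarrow> nat \<Rightarrow> ('a list \<Rightarrow> real) \<Rightarrow> real" where
  "ExW X q r F = (\<Sum>xss\<in>Lr X r. prod_list (map q xss) * F xss)"

lemma finite_Lr: "finite X \<Longrightarrow> finite (Lr X r)"
  unfolding Lr_def by (rule finite_lists_length_eq)

lemma Lr_0: "Lr X 0 = {[]}" unfolding Lr_def by auto

lemma Lr_Suc: "Lr X (Suc r) = (\<lambda>(a,x). a @ [x]) ` (Lr X r \<times> X)"
proof
  show "(\<lambda>(a,x). a @ [x]) ` (Lr X r \<times> X) \<subseteq> Lr X (Suc r)" unfolding Lr_def by auto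
  show "Lr X (Suc r) \<subseteq> (\<lambda>(a,x). a @ [x]) ` (Lr X r \<times> X)"
  proof
    fix xss assume "xss \<in> Lr X (Suc r)"
    hence h: "set xss \<subseteq> X" "length xss = Suc r" unfolding Lr_def by auto
    hence ne: "xss \<noteq> []" by auto
    have e: "xss = butlast xss @ [last xss]" using ne by simp
    have "butlast xss \<in> Lr X r" using h unfolding Lr_def by (auto dest: in_set_butlastD)
    moreover have "last xss \<in> X" using h ne by auto
    ultimately show "xss \<in> (\<lambda>(a,x). a @ [x]) ` (Lr X r \<times> X)" using e by force
  qed
qed

lemma Ex_rec:
  assumes "finite X"
  shows "ExW X q (Suc r) F = ExW X q r (\<lambda>prev. \<Sum>x\<in>X. q x * F (prev @ [x]))"
proof -
  have inj: "inj_on (\<lambda>(a,x). a @ [x]) (Lr X r \<times> X)" by (auto simp: inj_on_def)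
  have "ExW X q (Suc r) F = (\<Sum>(a,x)\<in>Lr X r \<times> X. prod_list (map q (a@[x])) * F (a@[x]))"
    unfolding ExW_def Lr_Suc by (subst sum.reindex[OF inj]) (simp add: case_prod_beta)
  also have "\<dots> = (\<Sum>a\<in>Lr X r. \<Sum>x\<in>X. prod_list (map q (a@[x])) * F (a@[x]))"
    by (rule sum.cartesian_product[symmetric])
  also have "\<dots> = ExW X q r (\<lambda>prev. \<Sum>x\<in>X. q x * F (prev @ [x]))"
    unfolding ExW_def by (simp add: sum_distrib_left algebra_simps)
  finally show ?thesis .
qed

lemma Ex_0: "ExW X q 0 F = F []" unfolding ExW_def Lr_0 by simp

lemma wt_nonneg: "(\<And>x. x \<in> X \<Longrightarrow> 0 \<le> (q x::real)) \<Longrightarrow> xss \<in> Lr X r \<Longrightarrow> 0 \<le> prod_list (map q xss)"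
  unfolding Lr_def by (induction xss arbitrary: r) auto

lemma Ex_mono:
  assumes "\<And>x. x \<in> X \<Longrightarrow> 0 \<le> q x" "\<And>xss. set xss \<subseteq> X \<Longrightarrow> length xss = r \<Longrightarrow> F xss \<le> G xss"
  shows "ExW X q r F \<le> ExW X q r G"
  unfolding ExW_def using assms wt_nonneg[of X q] unfolding Lr_def
  by (intro sum_mono mult_left_mono) auto

lemma Ex_add: "ExW X q r (\<lambda>x. F x + G x) = ExW X q r F + ExW X q r G"
  unfolding ExW_def by (simp add: algebra_simps sum.distrib)

lemma Ex_cmult: "ExW X q r (\<lambda>x. a * F x) = a * ExW X q r F"
  unfolding ExW_def by (simp add: algebra_simps sum_distrib_left)

lemma Ex_sum: "ExW X q r (\<lambda>x. \<Sum>i\<in>J. F i x) = (\<Sum>i\<in>J. ExW X q r (F i))"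
  unfolding ExW_def by (simp add: sum_distrib_left sum.swap[of _ J])

lemma Ex_const:
  assumes "finite X" "sum q X = 1"
  shows "ExW X q r (\<lambda>_. c) = c"
proof (induction r)
  case 0 thus ?case by (simp add: Ex_0)
next
  case (Suc r)
  have "ExW X q (Suc r) (\<lambda>_. c) = ExW X q r (\<lambda>_. (\<Sum>x\<in>X. q x) * c)"
    by (simp add: Ex_rec[OF assms(1)] sum_distrib_right)
  thus ?case using Suc assms by simp
qed

lemma Ex_rounds:
  assumes "finite X" "sum q X = 1"
  shows "ExW X q r (\<lambda>xss. \<Sum>i<length xss. f (xss ! i)) = real r * (\<Sum>x\<in>X. q x * f x)"
proof (induction r)
  case 0 thus ?case by (simp add: Ex_0)
next
  case (Suc r)
  have "ExW X q (Suc r) (\<lambda>xss. \<Sum>i<length xss. f (xss ! i))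
     = ExW X q r (\<lambda>prev. (\<Sum>x\<in>X. q x) * (\<Sum>i<length prev. f (prev ! i)) + (\<Sum>x\<in>X. q x * f x))"
    by (simp add: Ex_rec[OF assms(1)] nth_append sum_distrib_right sum_distrib_left sum.distrib algebra_simps sum.swap[of _ X])
  also have "\<dots> = real r * (\<Sum>x\<in>X. q x * f x) + (\<Sum>x\<in>X. q x * f x)"
    using Suc assms by (simp add: Ex_add Ex_const)
  finally show ?case by (simp add: algebra_simps)
qed

lemma Ex_jensen:
  assumes "finite X" "sum q X = 1" "\<And>x. x \<in> X \<Longrightarrow> 0 \<le> q x" "X \<noteq> {}"
  shows "exp (ExW X q r F) \<le> ExW X q r (\<lambda>xss. exp (F xss))"
proof -
  obtain x0 where "x0 \<in> X" using assms(4) by auto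
  hence ne: "Lr X r \<noteq> {}" unfolding Lr_def by (auto intro!: exI[of _ "replicate r x0"])
  have s1: "(\<Sum>xss\<in>Lr X r. prod_list (map q xss)) = 1"
    using Ex_const[OF assms(1,2), of r 1] unfolding ExW_def by simp
  show ?thesis unfolding ExW_def
    using convex_on_sum[OF finite_Lr[OF assms(1)] ne exp_convex s1, of F] wt_nonneg[of X q] assms(3)
    by auto
qed

definition RC :: "(('s,'x) inp \<Rightarrow> 'y list \<Rightarrow> real) \<Rightarrow> ('s \<Rightarrow> 'x list list \<Rightarrow> 'x list \<Rightarrow> 'y) \<Rightarrow> 's \<Rightarrow> 'x list list \<Rightarrow> real" where
  "RC C Ds s xss = (\<Sum>i<length xss. C (s, xss!i) (run_det (\<lambda>s' xs. Ds s' (take i xss) xs) (s, xss!i)))"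

lemma cost_run_star: "cost_star C (s,xss) (run_star Ds (s,xss)) = RC C Ds s xss"
  unfolding cost_star_def run_star_def RC_def by (intro sum.cong) auto

lemma RC_append: "RC C Ds s (xss @ [x]) = RC C Ds s xss + C (s,x) (run_det (\<lambda>s' xs. Ds s' xss xs) (s,x))"
  unfolding RC_def by (simp add: nth_append)

lemma round_alg:
  assumes "det_alg_star I V Ds" "set prev \<subseteq> X" "\<forall>x\<in>X. x \<noteq> [] \<and> (s,x) \<in> I" "det_alg I V D0"
  shows "det_alg I V (\<lambda>s' xs. if s' = s then Ds s' prev xs else D0 s' xs)"
  unfolding det_alg_def
proof
  fix \<sigma> assume \<sigma>: "\<sigma> \<in> I"
  obtain t xs where tx: "\<sigma> = (t, xs)" by fastforce
  show "valid_out V \<sigma> (run_det (\<lambda>s' xs. if s' = s then Ds s' prev xs else D0 s' xs) \<sigma>)"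
  proof (cases "t = s")
    case False
    hence "run_det (\<lambda>s' xs. if s' = s then Ds s' prev xs else D0 s' xs) \<sigma> = run_det D0 \<sigma>"
      using tx by (intro run_det_cong) auto
    thus ?thesis using assms(4) \<sigma> unfolding det_alg_def by simp
  next
    case True
    show ?thesis
    proof (cases "xs = []")
      case True thus ?thesis using tx by (simp add: valid_out_Nil run_det_Nil)
    next
      case False
      have inI: "(s, prev @ [xs]) \<in> I_star I" unfolding I_star_def using assms(2,3) False \<sigma> tx \<open>t = s\<close> by auto
      hence "valid_star V (s, prev @ [xs]) (run_star Ds (s, prev @ [xs]))"
        using assms(1) unfolding det_alg_star_def by auto
      hence "valid_out V (s, (prev@[xs]) ! length prev) ((run_star Ds (s, prev @ [xs])) ! length prev)"
        unfolding valid_star_def by (auto dest: list_all2_nthD)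
      moreover have "(run_star Ds (s, prev @ [xs])) ! length prev = run_det (\<lambda>s' ys. Ds s' prev ys) (s, xs)"
        unfolding run_star_def by (simp add: nth_append)
      moreover have "run_det (\<lambda>s' xs. if s' = s then Ds s' prev xs else D0 s' xs) \<sigma> = run_det (\<lambda>s' ys. Ds s' prev ys) (s, xs)"
        using tx \<open>t = s\<close> by (simp add: run_det_def)
      ultimately show ?thesis using tx \<open>t = s\<close> by simp
    qed
  qed
qed

lemma rd_le_bits_read:
  assumes "i < length (snd \<sigma>)"
  shows "rd A (orc A \<sigma>) (fst \<sigma>) (take (Suc i) (snd \<sigma>)) \<le> bits_read A \<sigma>"
proof -
  have e: "{rd A (orc A \<sigma>) (fst \<sigma>) (take i (snd \<sigma>)) | i. 1 \<le> i \<and> i \<le> length (snd \<sigma>)}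
     = (\<lambda>i. rd A (orc A \<sigma>) (fst \<sigma>) (take i (snd \<sigma>))) ` {1..length (snd \<sigma>)}" by auto
  have m: "rd A (orc A \<sigma>) (fst \<sigma>) (take (Suc i) (snd \<sigma>)) \<in> insert 0 ((\<lambda>i. rd A (orc A \<sigma>) (fst \<sigma>) (take i (snd \<sigma>))) ` {1..length (snd \<sigma>)})"
    using assms by (intro insertI2 imageI) auto
  show ?thesis unfolding bits_read_def e
    by (rule Max_ge[OF _ m]) simp
qed

lemma trunc_run:
  assumes "adv_alg I V b A" "bits_read A \<sigma> \<le> B"
  shows "run_det (ans A (\<lambda>k. k < B \<and> orc A \<sigma> k)) \<sigma> = run_adv A \<sigma>"
proof -
  have cons: "\<And>\<phi> \<phi>' s xs. (\<forall>k<rd A \<phi> s xs. \<phi> k = \<phi>' k) \<Longrightarrow> ans A \<phi>' s xs = ans A \<phi> s xs"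
    using assms(1) unfolding adv_alg_def by blast
  have "\<And>i. i < length (snd \<sigma>) \<Longrightarrow> ans A (\<lambda>k. k < B \<and> orc A \<sigma> k) (fst \<sigma>) (take (Suc i) (snd \<sigma>)) = ans A (orc A \<sigma>) (fst \<sigma>) (take (Suc i) (snd \<sigma>))"
  proof -
    fix i assume i: "i < length (snd \<sigma>)"
    have "rd A (orc A \<sigma>) (fst \<sigma>) (take (Suc i) (snd \<sigma>)) \<le> B"
      using rd_le_bits_read[OF i, of A] assms(2) by linarith
    hence "\<forall>k<rd A (orc A \<sigma>) (fst \<sigma>) (take (Suc i) (snd \<sigma>)). orc A \<sigma> k = (k < B \<and> orc A \<sigma> k)" by auto
    thus "ans A (\<lambda>k. k < B \<and> orc A \<sigma> k) (fst \<sigma>) (take (Suc i) (snd \<sigma>)) = ans A (orc A \<sigma>) (fst \<sigma>) (take (Suc i) (snd \<sigma>))"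
      by (rule cons)
  qed
  thus ?thesis unfolding run_adv_def run_det_def by simp
qed

definition Wset :: "nat \<Rightarrow> (nat \<Rightarrow> bool) set" where
  "Wset B = (\<lambda>w k. k < B \<and> w ! k) ` {w. set w \<subseteq> (UNIV::bool set) \<and> length w = B}"

lemma Wset_finite: "finite (Wset B)"
  unfolding Wset_def by (intro finite_imageI finite_lists_length_eq) auto

lemma Wset_card: "card (Wset B) \<le> 2 ^ B"
proof -
  have "card (Wset B) \<le> card {w. set w \<subseteq> (UNIV::bool set) \<and> length w = B}"
    unfolding Wset_def by (intro card_image_le finite_lists_length_eq) auto
  also have "\<dots> = 2 ^ B" by (subst card_lists_length_eq) auto
  finally show ?thesis .
qed

lemma trunc_in_Wset: "(\<lambda>k. k < B \<and> \<phi> k) \<in> Wset B"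
  unfolding Wset_def
  by (rule image_eqI[of _ _ "map \<phi> [0..<B]"]) (auto simp: fun_eq_iff)
lemma round_exp_bound:
  assumes X: "finite X" "\<forall>x\<in>X. x \<noteq> [] \<and> (s,x) \<in> I"
    and q: "\<And>x. x \<in> X \<Longrightarrow> 0 \<le> q x" "sum q X = 1"
    and D0: "det_alg I V D0"
    and PR: "\<And>D. det_alg I V D \<Longrightarrow> L \<le> (\<Sum>x\<in>X. q x * C (s,x) (run_det D (s,x)))"
    and bnd: "\<And>D x. det_alg I V D \<Longrightarrow> x \<in> X \<Longrightarrow> 0 \<le> C (s,x) (run_det D (s,x)) \<and> C (s,x) (run_det D (s,x)) \<le> Mx"
    and lam: "0 < (lam::real)"
    and Ds: "det_alg_star I V Ds"
    and prev: "set prev \<subseteq> X"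
  shows "(\<Sum>x\<in>X. q x * exp (- lam * C (s,x) (run_det (\<lambda>s' xs. Ds s' prev xs) (s,x))))
           \<le> exp (- lam * L + lam^2 * Mx^2 / 2)"
proof -
  let ?D = "\<lambda>s' xs. if s' = s then Ds s' prev xs else D0 s' xs"
  have dD: "det_alg I V ?D" by (rule round_alg[OF Ds prev X(2) D0])
  have eq: "\<And>x. run_det ?D (s,x) = run_det (\<lambda>s' xs. Ds s' prev xs) (s,x)"
    by (rule run_det_cong) auto
  define Y where "Y x = C (s,x) (run_det (\<lambda>s' xs. Ds s' prev xs) (s,x))" for x
  have Yb: "\<And>x. x \<in> X \<Longrightarrow> 0 \<le> Y x \<and> Y x \<le> Mx" using bnd[OF dD] eq unfolding Y_def by simp
  have L: "L \<le> (\<Sum>x\<in>X. q x * Y x)" using PR[OF dD] eq unfolding Y_def by simp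
  have pt: "exp (- lam * Y x) \<le> 1 - lam * Y x + lam^2 * Mx^2 / 2" if x: "x \<in> X" for x
  proof -
    have "exp (- (lam * Y x)) \<le> 1 - lam * Y x + (lam * Y x)^2 / 2"
      using Yb[OF x] lam by (intro exp_neg_le) simp
    moreover have "(lam * Y x)^2 \<le> lam^2 * Mx^2"
      using Yb[OF x] lam by (simp add: power_mult_distrib mult_left_mono power_mono)
    ultimately show ?thesis by simp
  qed
  have "(\<Sum>x\<in>X. q x * exp (- lam * Y x)) \<le> (\<Sum>x\<in>X. q x * (1 - lam * Y x + lam^2 * Mx^2 / 2))"
    using pt q(1) by (intro sum_mono mult_left_mono) auto
  also have "\<dots> = (\<Sum>x\<in>X. q x) * (1 + lam^2 * Mx^2 / 2) - lam * (\<Sum>x\<in>X. q x * Y x)"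
    by (simp add: algebra_simps sum.distrib sum_distrib_left sum_distrib_right sum_subtractf)
  also have "\<dots> \<le> 1 + lam^2 * Mx^2 / 2 - lam * L"
    using q(2) L lam by (simp add: mult_left_mono)
  also have "\<dots> \<le> exp (- lam * L + lam^2 * Mx^2 / 2)"
    using exp_ge_add_one_self[of "- lam * L + lam^2 * Mx^2 / 2"] by (simp add: algebra_simps)
  finally show ?thesis unfolding Y_def .
qed

lemma exp_bound:
  assumes X: "finite X" "\<forall>x\<in>X. x \<noteq> [] \<and> (s,x) \<in> I"
    and q: "\<And>x. x \<in> X \<Longrightarrow> 0 \<le> q x" "sum q X = 1"
    and D0: "det_alg I V D0"
    and PR: "\<And>D. det_alg I V D \<Longrightarrow> L \<le> (\<Sum>x\<in>X. q x * C (s,x) (run_det D (s,x)))"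
    and bnd: "\<And>D x. det_alg I V D \<Longrightarrow> x \<in> X \<Longrightarrow> 0 \<le> C (s,x) (run_det D (s,x)) \<and> C (s,x) (run_det D (s,x)) \<le> Mx"
    and lam: "0 < (lam::real)"
    and Ds: "det_alg_star I V Ds"
  shows "ExW X q r (\<lambda>xss. exp (- lam * RC C Ds s xss)) \<le> exp (- lam * L + lam^2 * Mx^2 / 2) ^ r"
proof (induction r)
  case 0 thus ?case by (simp add: Ex_0 RC_def)
next
  case (Suc r)
  let ?\<theta> = "exp (- lam * L + lam^2 * Mx^2 / 2)"
  have "ExW X q (Suc r) (\<lambda>xss. exp (- lam * RC C Ds s xss))
      = ExW X q r (\<lambda>prev. exp (- lam * RC C Ds s prev) *
           (\<Sum>x\<in>X. q x * exp (- lam * C (s,x) (run_det (\<lambda>s' xs. Ds s' prev xs) (s,x)))))"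
    unfolding Ex_rec[OF X(1)] RC_append
    by (simp add: distrib_left sum_distrib_left algebra_simps flip: exp_add)
  also have "\<dots> \<le> ExW X q r (\<lambda>prev. exp (- lam * RC C Ds s prev) * ?\<theta>)"
    using round_exp_bound[OF X q D0, of L C Mx lam Ds] PR bnd lam Ds
    by (intro Ex_mono q(1) mult_left_mono) auto
  also have "\<dots> = ?\<theta> * ExW X q r (\<lambda>prev. exp (- lam * RC C Ds s prev))"
    using Ex_cmult[of X q r ?\<theta>] by (simp add: mult.commute)
  also have "\<dots> \<le> ?\<theta> * ?\<theta> ^ r" using Suc by (intro mult_left_mono) auto
  finally show ?case by simp
qed
lemma adv_lower:
  assumes X: "finite X" "\<forall>x\<in>X. x \<noteq> [] \<and> (s,x) \<in> I" "X \<noteq> {}"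
    and q: "\<And>x. x \<in> X \<Longrightarrow> 0 \<le> q x" "sum q X = 1"
    and D0: "det_alg I V D0"
    and PR: "\<And>D. det_alg I V D \<Longrightarrow> L \<le> (\<Sum>x\<in>X. q x * C (s,x) (run_det D (s,x)))"
    and bnd: "\<And>D x. det_alg I V D \<Longrightarrow> x \<in> X \<Longrightarrow> 0 \<le> C (s,x) (run_det D (s,x)) \<and> C (s,x) (run_det D (s,x)) \<le> Mx"
    and lam: "0 < (lam::real)"
    and A: "adv_alg I V b A"
    and G: "\<forall>D. det_alg I V D \<longrightarrow> (\<exists>Ds. det_alg_star I V Ds \<and>
            (\<forall>\<sigma>s\<in>I_star I. cost_star C \<sigma>s (run_star Ds \<sigma>s)
                 \<le> C (g \<sigma>s) (run_det D (g \<sigma>s)) + k2 * real (length (snd \<sigma>s))))"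
    and B: "\<And>xss. set xss \<subseteq> X \<Longrightarrow> length xss = r \<Longrightarrow> bits_read A (g (s,xss)) \<le> B"
    and r: "1 \<le> r"
  shows "real r * (L - lam * Mx^2 / 2) - real B * ln 2 / lam - k2 * real r
          \<le> ExW X q r (\<lambda>xss. C (g (s,xss)) (run_adv A (g (s,xss))))"
proof -
  define Ds where "Ds \<phi> = (SOME Ds. det_alg_star I V Ds \<and>
            (\<forall>\<sigma>s\<in>I_star I. cost_star C \<sigma>s (run_star Ds \<sigma>s)
                 \<le> C (g \<sigma>s) (run_det (ans A \<phi>) (g \<sigma>s)) + k2 * real (length (snd \<sigma>s))))" for \<phi>
  have Dsp: "det_alg_star I V (Ds \<phi>) \<and> (\<forall>\<sigma>s\<in>I_star I. cost_star C \<sigma>s (run_star (Ds \<phi>) \<sigma>s)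
                 \<le> C (g \<sigma>s) (run_det (ans A \<phi>) (g \<sigma>s)) + k2 * real (length (snd \<sigma>s)))" for \<phi>
  proof -
    have d: "det_alg I V (ans A \<phi>)" using A unfolding adv_alg_def by blast
    show ?thesis unfolding Ds_def by (rule someI_ex[OF G[rule_format, OF d]])
  qed
  define Z where "Z xss = C (g (s,xss)) (run_adv A (g (s,xss))) + k2 * real r" for xss
  let ?\<theta> = "exp (- lam * L + lam^2 * Mx^2 / 2)"
  let ?W = "Wset B"
  have pt: "exp (- lam * Z xss) \<le> (\<Sum>\<phi>\<in>?W. exp (- lam * RC C (Ds \<phi>) s xss))"
    if xss: "set xss \<subseteq> X" "length xss = r" for xss
  proof -
    have IS: "(s,xss) \<in> I_star I" unfolding I_star_def using xss r X(2) by (cases xss) auto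
    define \<phi>0 where "\<phi>0 = (\<lambda>k. k < B \<and> orc A (g (s,xss)) k)"
    have W: "\<phi>0 \<in> ?W" unfolding \<phi>0_def by (rule trunc_in_Wset)
    have run: "run_det (ans A \<phi>0) (g (s,xss)) = run_adv A (g (s,xss))"
      unfolding \<phi>0_def by (rule trunc_run[OF A B[OF xss]])
    have c: "cost_star C (s,xss) (run_star (Ds \<phi>0) (s,xss)) \<le> C (g (s,xss)) (run_det (ans A \<phi>0) (g (s,xss))) + k2 * real (length (snd (s,xss)))"
      using Dsp[of \<phi>0] IS by blast
    have "RC C (Ds \<phi>0) s xss \<le> Z xss"
      using c xss(2) unfolding run Z_def cost_run_star by simp
    hence "exp (- lam * Z xss) \<le> exp (- lam * RC C (Ds \<phi>0) s xss)" using lam by simp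
    also have "\<dots> \<le> (\<Sum>\<phi>\<in>?W. exp (- lam * RC C (Ds \<phi>) s xss))"
      by (rule member_le_sum[OF W]) (auto simp: Wset_finite)
    finally show ?thesis .
  qed
  have "exp (ExW X q r (\<lambda>xss. - lam * Z xss)) \<le> ExW X q r (\<lambda>xss. exp (- lam * Z xss))"
    by (rule Ex_jensen[OF X(1) q(2) q(1) X(3)])
  also have "\<dots> \<le> ExW X q r (\<lambda>xss. \<Sum>\<phi>\<in>?W. exp (- lam * RC C (Ds \<phi>) s xss))"
    by (intro Ex_mono q(1) pt) auto
  also have "\<dots> = (\<Sum>\<phi>\<in>?W. ExW X q r (\<lambda>xss. exp (- lam * RC C (Ds \<phi>) s xss)))"
    by (rule Ex_sum)
  also have "\<dots> \<le> (\<Sum>\<phi>\<in>?W. ?\<theta> ^ r)"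
  proof (rule sum_mono)
    fix \<phi> assume "\<phi> \<in> ?W"
    show "ExW X q r (\<lambda>xss. exp (- lam * RC C (Ds \<phi>) s xss)) \<le> ?\<theta> ^ r"
      by (rule exp_bound[where X=X and s=s and I=I and q=q and V=V and L=L and C=C and Mx=Mx and lam=lam and Ds="Ds \<phi>" and r=r,
            OF X(1,2) q D0 PR bnd lam Dsp[THEN conjunct1]])
  qed
  also have "\<dots> = real (card ?W) * ?\<theta> ^ r" by simp
  also have "\<dots> \<le> 2 ^ B * ?\<theta> ^ r"
  proof (rule mult_right_mono)
    have "card ?W \<le> 2 ^ B" by (rule Wset_card)
    hence "real (card ?W) \<le> real (2 ^ B)" by (rule of_nat_mono)
    thus "real (card ?W) \<le> 2 ^ B" by simp
  qed simp
  also have "\<dots> = exp (real B * ln 2 + real r * (- lam * L + lam^2 * Mx^2 / 2))"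
  proof -
    have a: "exp (real B * ln 2) = 2 ^ B" using exp_of_nat_mult[of B "ln (2::real)"] by simp
    have b: "exp (real r * (- lam * L + lam^2 * Mx^2 / 2)) = ?\<theta> ^ r" by (rule exp_of_nat_mult)
    show ?thesis unfolding exp_add a b ..
  qed
  finally have i1: "ExW X q r (\<lambda>xss. - lam * Z xss) \<le> real B * ln 2 + real r * (- lam * L + lam^2 * Mx^2 / 2)"
    by simp
  have i2: "ExW X q r (\<lambda>xss. - lam * Z xss) = - lam * ExW X q r Z"
    using Ex_cmult[of X q r "- lam" Z] by simp
  have i3: "ExW X q r Z = ExW X q r (\<lambda>xss. C (g (s,xss)) (run_adv A (g (s,xss)))) + k2 * real r"
    unfolding Z_def Ex_add Ex_const[OF X(1) q(2)] by simp
  have ineq: "- lam * (ExW X q r (\<lambda>xss. C (g (s,xss)) (run_adv A (g (s,xss)))) + k2 * real r)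
      \<le> real B * ln 2 + real r * (- lam * L + lam^2 * Mx^2 / 2)" using i1 unfolding i2 i3 .
  have e: "real r * (L - lam*Mx^2/2) - real B * ln 2 / lam - k2*real r
     = (real r * (lam*L - lam^2*Mx^2/2) - real B * ln 2 - lam*k2*real r) / lam"
    using lam by (simp add: field_simps power2_eq_square)
  have "real r * (lam*L - lam^2*Mx^2/2) - real B * ln 2 - lam*k2*real r
     \<le> lam * ExW X q r (\<lambda>xss. C (g (s,xss)) (run_adv A (g (s,xss))))"
    using ineq by (simp add: algebra_simps)
  thus ?thesis unfolding e using lam by (simp add: pos_divide_le_eq mult.commute)
qed
lemma select_state:
  fixes p :: "('s,'x) inp pmf" and c1 a beta K alpha :: real
  assumes op: "online_problem I V C" and fin: "\<forall>\<sigma>\<in>I. finite {ys. valid_out V \<sigma> ys}"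
    and pf: "finite (set_pmf p)" and pI: "set_pmf p \<subseteq> I"
    and H: "\<forall>D. det_alg I V D \<longrightarrow>
              measure_pmf.expectation p (\<lambda>\<sigma>. C \<sigma> (run_det D \<sigma>))
                \<ge> c1 * measure_pmf.expectation p (OPT V C) + alpha"
    and D0: "det_alg I V D0"
    and Ke: "\<And>\<sigma>. \<sigma> \<in> I \<Longrightarrow> snd \<sigma> = [] \<Longrightarrow> (1 - c1) * OPT V C \<sigma> \<le> K"
    and Kn: "\<And>\<sigma>. \<sigma> \<in> I \<Longrightarrow> (a - c1) * OPT V C \<sigma> \<le> K"
    and beta: "0 \<le> beta" and alpha: "K + beta < alpha"
  shows "\<exists>s. (\<exists>xs. (s,xs) \<in> set_pmf p \<and> xs \<noteq> []) \<and>
     (\<forall>D. det_alg I V D \<longrightarrow>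
        (\<Sum>\<sigma>\<in>{\<sigma>\<in>set_pmf p. fst \<sigma> = s \<and> snd \<sigma> \<noteq> []}. pmf p \<sigma> * (a * OPT V C \<sigma> + beta))
        \<le> (\<Sum>\<sigma>\<in>{\<sigma>\<in>set_pmf p. fst \<sigma> = s \<and> snd \<sigma> \<noteq> []}. pmf p \<sigma> * C \<sigma> (run_det D \<sigma>)))"
proof (rule ccontr)
  assume neg: "\<not> ?thesis"
  define S where "S = set_pmf p"
  define St where "St t = {\<sigma>\<in>S. fst \<sigma> = t \<and> snd \<sigma> \<noteq> []}" for t
  define P where "P t D \<longleftrightarrow> det_alg I V D \<and>
        (\<Sum>\<sigma>\<in>St t. pmf p \<sigma> * C \<sigma> (run_det D \<sigma>)) \<le> (\<Sum>\<sigma>\<in>St t. pmf p \<sigma> * (a * OPT V C \<sigma> + beta))" for t D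
  have exP: "\<exists>D. P t D" for t
  proof (cases "St t = {}")
    case True thus ?thesis using D0 unfolding P_def by auto
  next
    case False
    then obtain xs where "(t,xs) \<in> set_pmf p" "xs \<noteq> []" unfolding St_def S_def by force
    hence "\<exists>D. det_alg I V D \<and> \<not> ((\<Sum>\<sigma>\<in>St t. pmf p \<sigma> * (a * OPT V C \<sigma> + beta))
        \<le> (\<Sum>\<sigma>\<in>St t. pmf p \<sigma> * C \<sigma> (run_det D \<sigma>)))"
      using neg unfolding St_def S_def by blast
    thus ?thesis unfolding P_def by force
  qed
  define Dsel where "Dsel t = (SOME D. P t D)" for t
  have Ps: "P t (Dsel t)" for t unfolding Dsel_def by (rule someI_ex[OF exP])
  define D where "D = (\<lambda>t xs. Dsel t t xs)"
  have runD: "run_det D \<sigma> = run_det (Dsel (fst \<sigma>)) \<sigma>" for \<sigma>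
    unfolding D_def by (rule run_det_cong) simp
  have dD: "det_alg I V D" unfolding det_alg_def
  proof
    fix \<sigma> assume "\<sigma> \<in> I"
    thus "valid_out V \<sigma> (run_det D \<sigma>)" using Ps[of "fst \<sigma>"] unfolding runD P_def det_alg_def by blast
  qed
  have finS: "finite S" using pf unfolding S_def .
  have SI: "S \<subseteq> I" using pI unfolding S_def .
  define Se where "Se = S \<inter> {\<sigma>. snd \<sigma> = []}"
  define Sn where "Sn = S - {\<sigma>. snd \<sigma> = []}"
  have exp_eq: "measure_pmf.expectation p f = (\<Sum>\<sigma>\<in>Se. pmf p \<sigma> * f \<sigma>) + (\<Sum>\<sigma>\<in>Sn. pmf p \<sigma> * f \<sigma>)" for f :: "_ \<Rightarrow> real"
  proof -
    have "measure_pmf.expectation p f = (\<Sum>\<sigma>\<in>S. pmf p \<sigma> * f \<sigma>)"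
      by (subst integral_measure_pmf[OF finS]) (auto simp: S_def)
    also have "\<dots> = (\<Sum>\<sigma>\<in>Se. pmf p \<sigma> * f \<sigma>) + (\<Sum>\<sigma>\<in>Sn. pmf p \<sigma> * f \<sigma>)"
      unfolding Se_def Sn_def by (rule sum.Int_Diff[OF finS])
    finally show ?thesis .
  qed
  have e_eq: "\<And>\<sigma>. \<sigma> \<in> Se \<Longrightarrow> C \<sigma> (run_det D \<sigma>) = OPT V C \<sigma>"
    unfolding Se_def by (simp add: run_det_Nil OPT_empty)
  have finSn: "finite Sn" unfolding Sn_def using finS by simp
  have grp: "(\<Sum>\<sigma>\<in>Sn. h \<sigma>) = (\<Sum>t\<in>fst ` Sn. \<Sum>\<sigma>\<in>St t. h \<sigma>)" for h :: "_ \<Rightarrow> real"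
  proof -
    have "(\<Sum>t\<in>fst ` Sn. \<Sum>\<sigma>\<in>{x \<in> Sn. fst x = t}. h \<sigma>) = (\<Sum>\<sigma>\<in>Sn. h \<sigma>)"
      by (rule sum.group[OF finSn]) (use finSn in auto)
    moreover have "{x \<in> Sn. fst x = t} = St t" for t unfolding Sn_def St_def by auto
    ultimately show ?thesis by simp
  qed
  have "(\<Sum>\<sigma>\<in>Sn. pmf p \<sigma> * C \<sigma> (run_det D \<sigma>)) = (\<Sum>t\<in>fst ` Sn. \<Sum>\<sigma>\<in>St t. pmf p \<sigma> * C \<sigma> (run_det (Dsel t) \<sigma>))"
    unfolding grp by (intro sum.cong refl) (simp add: runD St_def)
  also have "\<dots> \<le> (\<Sum>t\<in>fst ` Sn. \<Sum>\<sigma>\<in>St t. pmf p \<sigma> * (a * OPT V C \<sigma> + beta))"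
  proof (rule sum_mono)
    fix t assume "t \<in> fst ` Sn"
    show "(\<Sum>\<sigma>\<in>St t. pmf p \<sigma> * C \<sigma> (run_det (Dsel t) \<sigma>)) \<le> (\<Sum>\<sigma>\<in>St t. pmf p \<sigma> * (a * OPT V C \<sigma> + beta))"
      using Ps[of t] unfolding P_def by blast
  qed
  also have "\<dots> = (\<Sum>\<sigma>\<in>Sn. pmf p \<sigma> * (a * OPT V C \<sigma> + beta))" unfolding grp ..
  finally have nle: "(\<Sum>\<sigma>\<in>Sn. pmf p \<sigma> * C \<sigma> (run_det D \<sigma>)) \<le> (\<Sum>\<sigma>\<in>Sn. pmf p \<sigma> * (a * OPT V C \<sigma> + beta))" .
  have Hd: "c1 * measure_pmf.expectation p (OPT V C) + alpha \<le> measure_pmf.expectation p (\<lambda>\<sigma>. C \<sigma> (run_det D \<sigma>))"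
    using H[rule_format, OF dD] .
  have up: "measure_pmf.expectation p (\<lambda>\<sigma>. C \<sigma> (run_det D \<sigma>)) \<le> (\<Sum>\<sigma>\<in>Se. pmf p \<sigma> * OPT V C \<sigma>) + (\<Sum>\<sigma>\<in>Sn. pmf p \<sigma> * (a * OPT V C \<sigma> + beta))"
    unfolding exp_eq using nle e_eq by simp
  define E1 where "E1 = (\<Sum>\<sigma>\<in>Se. pmf p \<sigma> * OPT V C \<sigma>)"
  define N1 where "N1 = (\<Sum>\<sigma>\<in>Sn. pmf p \<sigma> * (a * OPT V C \<sigma> + beta))"
  define N0 where "N0 = (\<Sum>\<sigma>\<in>Sn. pmf p \<sigma> * OPT V C \<sigma>)"
  have eo: "measure_pmf.expectation p (OPT V C) = E1 + N0" unfolding E1_def N0_def by (rule exp_eq)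
  have "alpha \<le> E1 + N1 - c1 * (E1 + N0)"
    using Hd[unfolded eo] up unfolding E1_def[symmetric] N1_def[symmetric] by linarith
  also have "E1 + N1 - c1 * (E1 + N0) = (\<Sum>\<sigma>\<in>Se. pmf p \<sigma> * ((1 - c1) * OPT V C \<sigma>)) + (\<Sum>\<sigma>\<in>Sn. pmf p \<sigma> * ((a - c1) * OPT V C \<sigma> + beta))"
  proof -
    have 1: "(1 - c1) * E1 = (\<Sum>\<sigma>\<in>Se. pmf p \<sigma> * ((1 - c1) * OPT V C \<sigma>))"
      unfolding E1_def sum_distrib_left by (intro sum.cong refl) (simp add: algebra_simps)
    have 2: "N1 - c1 * N0 = (\<Sum>\<sigma>\<in>Sn. pmf p \<sigma> * ((a - c1) * OPT V C \<sigma> + beta))"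
      unfolding N1_def N0_def sum_distrib_left sum_subtractf[symmetric] by (intro sum.cong refl) (simp add: algebra_simps)
    have "E1 + N1 - c1 * (E1 + N0) = (1 - c1) * E1 + (N1 - c1 * N0)" by (simp add: algebra_simps)
    thus ?thesis unfolding 1 2 .
  qed
  also have "\<dots> \<le> (\<Sum>\<sigma>\<in>Se. pmf p \<sigma> * (K + beta)) + (\<Sum>\<sigma>\<in>Sn. pmf p \<sigma> * (K + beta))"
  proof (rule add_mono[OF sum_mono sum_mono])
    fix \<sigma> assume s: "\<sigma> \<in> Se"
    hence "\<sigma> \<in> I" "snd \<sigma> = []" using SI unfolding Se_def by auto
    hence "(1 - c1) * OPT V C \<sigma> \<le> K" by (rule Ke)
    hence "(1 - c1) * OPT V C \<sigma> \<le> K + beta" using beta by linarith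
    thus "pmf p \<sigma> * ((1 - c1) * OPT V C \<sigma>) \<le> pmf p \<sigma> * (K + beta)" by (rule mult_left_mono) simp
  next
    fix \<sigma> assume s: "\<sigma> \<in> Sn"
    hence "\<sigma> \<in> I" using SI unfolding Sn_def by auto
    hence "(a - c1) * OPT V C \<sigma> \<le> K" by (rule Kn)
    hence "(a - c1) * OPT V C \<sigma> + beta \<le> K + beta" by linarith
    thus "pmf p \<sigma> * ((a - c1) * OPT V C \<sigma> + beta) \<le> pmf p \<sigma> * (K + beta)" by (rule mult_left_mono) simp
  qed
  also have "\<dots> = (K + beta) * (\<Sum>\<sigma>\<in>S. pmf p \<sigma>)"
    unfolding Se_def Sn_def sum.Int_Diff[OF finS, symmetric] sum_distrib_left by (intro sum.cong refl) (rule mult.commute)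
  also have "\<dots> = K + beta" using sum_pmf_eq_1[OF finS] unfolding S_def by simp
  finally show False using alpha by simp
qed
lemma exchange:
  fixes F :: "'a \<Rightarrow> 'b list \<Rightarrow> real"
  assumes M: "prob_space M" and X: "finite X" and q: "\<And>x. x \<in> X \<Longrightarrow> 0 \<le> q x"
    and low: "\<And>A. A \<in> space M \<Longrightarrow> Low \<le> ExW X q r (F A)"
    and Fnn: "\<And>A xss. A \<in> space M \<Longrightarrow> xss \<in> Lr X r \<Longrightarrow> 0 \<le> F A xss"
    and meas: "\<And>xss. xss \<in> Lr X r \<Longrightarrow> (\<lambda>A. F A xss) \<in> borel_measurable M"
    and up: "\<And>xss. xss \<in> Lr X r \<Longrightarrow> (\<integral>\<^sup>+A. ennreal (F A xss) \<partial>M) \<le> ennreal (U xss)"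
    and Unn: "\<And>xss. xss \<in> Lr X r \<Longrightarrow> 0 \<le> U xss"
  shows "Low \<le> ExW X q r U"
proof -
  have wnn: "\<And>xss. xss \<in> Lr X r \<Longrightarrow> 0 \<le> prod_list (map q xss)" using wt_nonneg[of X q] q by blast
  have EUnn: "0 \<le> ExW X q r U" unfolding ExW_def using wnn Unn by (intro sum_nonneg mult_nonneg_nonneg) auto
  have eq: "ennreal (ExW X q r (F A)) = (\<Sum>xss\<in>Lr X r. ennreal (prod_list (map q xss)) * ennreal (F A xss))"
    if A: "A \<in> space M" for A
    unfolding ExW_def using wnn Fnn[OF A]
    by (subst sum_ennreal[symmetric]) (auto intro!: sum.cong simp: ennreal_mult)
  have "ennreal Low = (\<integral>\<^sup>+A. ennreal Low \<partial>M)" using prob_space.emeasure_space_1[OF M] by simp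
  also have "\<dots> \<le> (\<integral>\<^sup>+A. ennreal (ExW X q r (F A)) \<partial>M)"
    by (intro nn_integral_mono ennreal_leI low)
  also have "\<dots> = (\<integral>\<^sup>+A. (\<Sum>xss\<in>Lr X r. ennreal (prod_list (map q xss)) * ennreal (F A xss)) \<partial>M)"
    by (intro nn_integral_cong eq)
  also have "\<dots> = (\<Sum>xss\<in>Lr X r. ennreal (prod_list (map q xss)) * (\<integral>\<^sup>+A. ennreal (F A xss) \<partial>M))"
    using meas by (subst nn_integral_sum) (auto simp: nn_integral_cmult)
  also have "\<dots> \<le> (\<Sum>xss\<in>Lr X r. ennreal (prod_list (map q xss)) * ennreal (U xss))"
  proof (rule sum_mono)
    fix xss assume "xss \<in> Lr X r"
    thus "ennreal (prod_list (map q xss)) * (\<integral>\<^sup>+A. ennreal (F A xss) \<partial>M) \<le> ennreal (prod_list (map q xss)) * ennreal (U xss)"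
      by (intro mult_left_mono up) auto
  qed
  also have "\<dots> = ennreal (ExW X q r U)"
    unfolding ExW_def using wnn Unn
    by (subst sum_ennreal[symmetric]) (auto intro!: sum.cong simp: ennreal_mult)
  finally have "ennreal Low \<le> ennreal (ExW X q r U)" .
  thus ?thesis using EUnn by simp
qed

lemma OPT_star_le:
  assumes op: "online_problem I V C" and fin: "\<forall>\<sigma>\<in>I. finite {ys. valid_out V \<sigma> ys}"
    and xI: "\<forall>x\<in>set xss. (s,x) \<in> I"
  shows "OPT_star V C (s,xss) \<le> (\<Sum>i<length xss. OPT V C (s, xss!i))"
proof -
  define ch where "ch x = (SOME ys. valid_out V (s,x) ys \<and> OPT V C (s,x) = C (s,x) ys)" for x
  have chp: "valid_out V (s,x) (ch x) \<and> OPT V C (s,x) = C (s,x) (ch x)" if "(s,x) \<in> I" for x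
  proof -
    have "finite {ys. valid_out V (s,x) ys}" using fin that by blast
    from OPT_facts(1)[OF op that this] show ?thesis unfolding ch_def by (rule someI_ex)
  qed
  define \<gamma>s where "\<gamma>s = map ch xss"
  have xiI: "(s, xss!i) \<in> I" if "i < length xss" for i using xI nth_mem[OF that] by blast
  have v: "valid_star V (s,xss) \<gamma>s"
    unfolding valid_star_def \<gamma>s_def list_all2_conv_all_nth
  proof (intro conjI allI impI)
    fix i assume i: "i < length (snd (s,xss))"
    hence "valid_out V (s, xss!i) (ch (xss!i))" using chp[OF xiI] by simp
    thus "valid_out V (fst (s, xss), snd (s, xss) ! i) (map ch xss ! i)" using i by simp
  qed simp
  have c: "cost_star C (s,xss) \<gamma>s = (\<Sum>i<length xss. OPT V C (s, xss!i))"
    unfolding cost_star_def \<gamma>s_def fst_conv snd_conv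
  proof (rule sum.cong[OF refl])
    fix i assume "i \<in> {..<length xss}"
    hence i: "i < length xss" by simp
    show "C (s, xss ! i) (map ch xss ! i) = OPT V C (s, xss ! i)"
      using chp[OF xiI[OF i]] i by simp
  qed
  have bdd: "bdd_below {cost_star C (s,xss) \<gamma>s | \<gamma>s. valid_star V (s,xss) \<gamma>s}"
  proof (rule bdd_belowI)
    fix y assume "y \<in> {cost_star C (s,xss) \<gamma>s | \<gamma>s. valid_star V (s,xss) \<gamma>s}"
    then obtain \<gamma>s' where y: "y = cost_star C (s,xss) \<gamma>s'" and vs: "valid_star V (s,xss) \<gamma>s'" by blast
    have "\<forall>i<length xss. valid_out V (s, xss!i) (\<gamma>s' ! i)" using vs unfolding valid_star_def list_all2_conv_all_nth by auto
    have nn: "\<forall>\<sigma>\<in>I. \<forall>ys. valid_out V \<sigma> ys \<longrightarrow> 0 \<le> C \<sigma> ys" using op unfolding online_problem_def by blast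
    have "\<forall>i<length xss. 0 \<le> C (s, xss!i) (\<gamma>s' ! i)"
    proof (intro allI impI)
      fix i assume i: "i < length xss"
      show "0 \<le> C (s, xss!i) (\<gamma>s' ! i)" using nn xiI[OF i] \<open>\<forall>i<length xss. valid_out V (s, xss!i) (\<gamma>s' ! i)\<close> i by blast
    qed
    thus "0 \<le> y" unfolding y cost_star_def by (intro sum_nonneg) auto
  qed
  have "OPT_star V C (s,xss) \<le> cost_star C (s,xss) \<gamma>s"
    unfolding OPT_star_def using v bdd by (intro cInf_lower) auto
  thus ?thesis unfolding c .
qed
lemma sum_list_len_le: "(\<forall>x\<in>set xss. length x \<le> m) \<Longrightarrow> sum_list (map length xss) \<le> length xss * m"
  by (induction xss) auto

theorem theorem1:
  fixes I :: "('s,'x) inp set"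
    and V :: "('s,'x) inp \<Rightarrow> nat \<Rightarrow> 'y set"
    and C :: "('s,'x) inp \<Rightarrow> 'y list \<Rightarrow> real"
    and c :: real
  assumes "online_problem I V C"
    and "repeatable I V C"
    and "\<forall>\<epsilon>>0. \<forall>\<alpha>::real. \<exists>p :: ('s,'x) inp pmf.
           finite (set_pmf p) \<and> set_pmf p \<subseteq> I \<and>
           (\<forall>D. det_alg I V D \<longrightarrow>
              measure_pmf.expectation p (\<lambda>\<sigma>. C \<sigma> (run_det D \<sigma>))
                \<ge> (c - \<epsilon>) * measure_pmf.expectation p (OPT V C) + \<alpha>)"
  shows "\<forall>(b :: nat \<Rightarrow> nat) (M :: ('s,'x,'y) adv_alg measure).
           (\<lambda>n. real (b n)) \<in> o(\<lambda>n. real n) \<longrightarrow> rand_alg I V C b M \<longrightarrow>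
           ratio_at_least I V C M c"
proof (intro allI impI)
  fix b :: "nat \<Rightarrow> nat" and M :: "('s,'x,'y) adv_alg measure"
  assume bo: "(\<lambda>n. real (b n)) \<in> o(\<lambda>n. real n)" and RA: "rand_alg I V C b M"
  have op: "online_problem I V C" by (rule assms(1))
  have PM: "prob_space M" using RA unfolding rand_alg_def by blast
  have SM: "space M \<subseteq> {A. adv_alg I V b A}" using RA unfolding rand_alg_def by blast
  have meas: "\<forall>\<sigma>\<in>I. (\<lambda>A. C \<sigma> (run_adv A \<sigma>)) \<in> borel_measurable M" using RA unfolding rand_alg_def by blast
  have fin: "\<forall>\<sigma>\<in>I. finite {ys. valid_out V \<sigma> ys}" using assms(2) unfolding repeatable_def by blast
  have "\<exists>(k1::real) (k2::real) (k3::real) (g :: 's \<times> 'x list list \<Rightarrow> ('s,'x) inp).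
        0 \<le> k1 \<and> 0 \<le> k2 \<and> 0 \<le> k3 \<and>
        (\<forall>\<sigma>s\<in>I_star I. g \<sigma>s \<in> I) \<and>
        (\<forall>\<sigma>s\<in>I_star I. real (length (snd (g \<sigma>s))) \<le> real (len_star \<sigma>s) + k1 * real (length (snd \<sigma>s))) \<and>
        (\<forall>D. det_alg I V D \<longrightarrow> (\<exists>Ds. det_alg_star I V Ds \<and>
            (\<forall>\<sigma>s\<in>I_star I. cost_star C \<sigma>s (run_star Ds \<sigma>s)
                 \<le> C (g \<sigma>s) (run_det D (g \<sigma>s)) + k2 * real (length (snd \<sigma>s))))) \<and>
        (\<forall>\<sigma>s\<in>I_star I. OPT_star V C \<sigma>s \<ge> OPT V C (g \<sigma>s) - k3 * real (length (snd \<sigma>s)))"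
    using assms(2) unfolding repeatable_def by (rule conjunct2)
  then obtain k1 k2 k3 :: real and g :: "'s \<times> 'x list list \<Rightarrow> ('s,'x) inp" where
    k: "0 \<le> k1" "0 \<le> k2" "0 \<le> k3"
    and gI: "\<forall>\<sigma>s\<in>I_star I. g \<sigma>s \<in> I"
    and glen: "\<forall>\<sigma>s\<in>I_star I. real (length (snd (g \<sigma>s))) \<le> real (len_star \<sigma>s) + k1 * real (length (snd \<sigma>s))"
    and G: "\<forall>D. det_alg I V D \<longrightarrow> (\<exists>Ds. det_alg_star I V Ds \<and>
            (\<forall>\<sigma>s\<in>I_star I. cost_star C \<sigma>s (run_star Ds \<sigma>s)
                 \<le> C (g \<sigma>s) (run_det D (g \<sigma>s)) + k2 * real (length (snd \<sigma>s))))"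
    and G3: "\<forall>\<sigma>s\<in>I_star I. OPT_star V C \<sigma>s \<ge> OPT V C (g \<sigma>s) - k3 * real (length (snd \<sigma>s))"
    by (elim exE conjE)
  show "ratio_at_least I V C M c" unfolding ratio_at_least_def
  proof (intro allI impI notI)
    fix c1 assume c1c: "c1 < c" and comp: "competitive I V C M c1"
    from comp obtain \<alpha>0 where A0: "\<forall>\<sigma>\<in>I. 0 \<le> c1 * OPT V C \<sigma> + \<alpha>0 \<and> exp_cost C M \<sigma> \<le> ennreal (c1 * OPT V C \<sigma> + \<alpha>0)"
      unfolding competitive_def by blast
    obtain A1 where A1: "A1 \<in> space M" using prob_space.not_empty[OF PM] by blast
    have advA: "\<And>A. A \<in> space M \<Longrightarrow> adv_alg I V b A" using SM by blast
    define D0 where "D0 = ans A1 (\<lambda>_. False)"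
    have D0: "det_alg I V D0" using advA[OF A1] unfolding adv_alg_def D0_def by blast
    have OPTnn: "\<And>\<sigma>. \<sigma> \<in> I \<Longrightarrow> 0 \<le> OPT V C \<sigma>"
    proof -
      fix \<sigma> assume s: "\<sigma> \<in> I"
      have "finite {ys. valid_out V \<sigma> ys}" using fin s by blast
      thus "0 \<le> OPT V C \<sigma>" by (rule OPT_facts(3)[OF op s])
    qed
    define a where "a = max c1 0"
    define K where "K = \<bar>\<alpha>0\<bar>"
    define beta where "beta = a * k3 + k2 + 1"
    define alpha where "alpha = K + beta + 1"
    have Ke: "(1 - c1) * OPT V C \<sigma> \<le> K" if s: "\<sigma> \<in> I" "snd \<sigma> = []" for \<sigma>
    proof -
      have ra: "run_adv A \<sigma> = []" for A unfolding run_adv_def by (rule run_det_Nil[OF s(2)])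
      have "exp_cost C M \<sigma> = ennreal (C \<sigma> [])"
        unfolding exp_cost_def ra using prob_space.emeasure_space_1[OF PM] by simp
      moreover have "exp_cost C M \<sigma> \<le> ennreal (c1 * OPT V C \<sigma> + \<alpha>0)" using A0 s(1) by blast
      ultimately have "ennreal (OPT V C \<sigma>) \<le> ennreal (c1 * OPT V C \<sigma> + \<alpha>0)"
        unfolding OPT_empty[OF s(2)] by simp
      moreover have "0 \<le> c1 * OPT V C \<sigma> + \<alpha>0" using A0 s(1) by blast
      ultimately have "OPT V C \<sigma> \<le> c1 * OPT V C \<sigma> + \<alpha>0" by simp
      moreover have "\<alpha>0 \<le> K" unfolding K_def by simp
      ultimately show ?thesis by (simp add: algebra_simps)
    qed
    have Kn: "(a - c1) * OPT V C \<sigma> \<le> K" if s: "\<sigma> \<in> I" for \<sigma>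
    proof (cases "0 \<le> c1")
      case True thus ?thesis unfolding a_def K_def by simp
    next
      case False
      have "0 \<le> c1 * OPT V C \<sigma> + \<alpha>0" using A0 s by blast
      moreover have "\<alpha>0 \<le> K" unfolding K_def by simp
      ultimately show ?thesis using False unfolding a_def by simp
    qed
    have bet: "0 \<le> beta" using k unfolding beta_def a_def by simp
    have alph: "K + beta < alpha" unfolding alpha_def by simp
    have "\<exists>p :: ('s,'x) inp pmf. finite (set_pmf p) \<and> set_pmf p \<subseteq> I \<and>
           (\<forall>D. det_alg I V D \<longrightarrow>
              measure_pmf.expectation p (\<lambda>\<sigma>. C \<sigma> (run_det D \<sigma>))
                \<ge> (c - (c - c1)) * measure_pmf.expectation p (OPT V C) + alpha)"
      using assms(3)[rule_format, of "c - c1" alpha] c1c by simp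
    then obtain p :: "('s,'x) inp pmf" where pf: "finite (set_pmf p)" and pI: "set_pmf p \<subseteq> I"
      and H: "\<forall>D. det_alg I V D \<longrightarrow>
              measure_pmf.expectation p (\<lambda>\<sigma>. C \<sigma> (run_det D \<sigma>))
                \<ge> c1 * measure_pmf.expectation p (OPT V C) + alpha" by auto
    obtain s where s1: "\<exists>xs. (s,xs) \<in> set_pmf p \<and> xs \<noteq> []"
      and s2: "\<forall>D. det_alg I V D \<longrightarrow>
        (\<Sum>\<sigma>\<in>{\<sigma>\<in>set_pmf p. fst \<sigma> = s \<and> snd \<sigma> \<noteq> []}. pmf p \<sigma> * (a * OPT V C \<sigma> + beta))
        \<le> (\<Sum>\<sigma>\<in>{\<sigma>\<in>set_pmf p. fst \<sigma> = s \<and> snd \<sigma> \<noteq> []}. pmf p \<sigma> * C \<sigma> (run_det D \<sigma>))"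
      using select_state[OF op fin pf pI H D0 Ke Kn bet alph] by blast
    define X where "X = {xs. (s,xs) \<in> set_pmf p \<and> xs \<noteq> []}"
    have Xfin: "finite X"
    proof (rule finite_subset)
      show "X \<subseteq> snd ` set_pmf p" unfolding X_def by force
    qed (use pf in simp)
    have Xne: "X \<noteq> {}" using s1 unfolding X_def by blast
    have XI: "\<forall>x\<in>X. x \<noteq> [] \<and> (s,x) \<in> I" using pI unfolding X_def by blast
    have Sseq: "{\<sigma>\<in>set_pmf p. fst \<sigma> = s \<and> snd \<sigma> \<noteq> []} = (\<lambda>x. (s,x)) ` X"
      unfolding X_def by force
    have reidx: "(\<Sum>\<sigma>\<in>{\<sigma>\<in>set_pmf p. fst \<sigma> = s \<and> snd \<sigma> \<noteq> []}. f \<sigma>) = (\<Sum>x\<in>X. f (s,x))" for f :: "_ \<Rightarrow> real"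
      unfolding Sseq by (subst sum.reindex) (auto simp: inj_on_def)
    define Wt where "Wt = (\<Sum>x\<in>X. pmf p (s,x))"
    have Wpos: "0 < Wt" unfolding Wt_def
      by (rule sum_pos[OF Xfin Xne]) (auto simp: X_def pmf_positive)
    define q where "q x = pmf p (s,x) / Wt" for x
    have q0: "\<And>x. x \<in> X \<Longrightarrow> 0 \<le> q x" unfolding q_def using Wpos by simp
    have q1: "sum q X = 1" unfolding q_def Wt_def sum_divide_distrib[symmetric] using Wpos Wt_def by simp
    define Q where "Q = (\<Sum>x\<in>X. q x * OPT V C (s,x))"
    define L where "L = (\<Sum>x\<in>X. q x * (a * OPT V C (s,x) + beta))"
    have LQ: "L = a * Q + beta"
    proof -
      have "L = a * Q + beta * sum q X"
        unfolding L_def Q_def sum_distrib_left sum_distrib_right sum.distrib[symmetric]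
        by (intro sum.cong refl) (simp add: algebra_simps)
      thus ?thesis using q1 by simp
    qed
    have PR: "L \<le> (\<Sum>x\<in>X. q x * C (s,x) (run_det D (s,x)))" if dD: "det_alg I V D" for D
    proof -
      have "(\<Sum>x\<in>X. pmf p (s,x) * (a * OPT V C (s,x) + beta)) \<le> (\<Sum>x\<in>X. pmf p (s,x) * C (s,x) (run_det D (s,x)))"
        using s2 dD unfolding reidx by simp
      hence "(\<Sum>x\<in>X. pmf p (s,x) * (a * OPT V C (s,x) + beta)) / Wt \<le> (\<Sum>x\<in>X. pmf p (s,x) * C (s,x) (run_det D (s,x))) / Wt"
        using Wpos by (intro divide_right_mono) auto
      thus ?thesis unfolding L_def q_def sum_divide_distrib by simp
    qed
    define Mx where "Mx = Max (insert 0 (\<Union>x\<in>X. C (s,x) ` {ys. valid_out V (s,x) ys}))"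
    have Mfin: "finite (insert 0 (\<Union>x\<in>X. C (s,x) ` {ys. valid_out V (s,x) ys}))"
      using Xfin fin XI by auto
    have Mx0: "0 \<le> Mx" unfolding Mx_def by (rule Max_ge[OF Mfin]) simp
    have bnd: "0 \<le> C (s,x) (run_det D (s,x)) \<and> C (s,x) (run_det D (s,x)) \<le> Mx"
      if dD: "det_alg I V D" and x: "x \<in> X" for D x
    proof -
      have sx: "(s,x) \<in> I" using XI x by blast
      have v: "valid_out V (s,x) (run_det D (s,x))" using dD sx unfolding det_alg_def by blast
      have "0 \<le> C (s,x) (run_det D (s,x))" using op sx v unfolding online_problem_def by blast
      moreover have "C (s,x) (run_det D (s,x)) \<le> Mx" unfolding Mx_def
        by (rule Max_ge[OF Mfin]) (use v x in blast)
      ultimately show ?thesis by simp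
    qed
    define lam where "lam = 1 / (Mx^2 + 1)"
    have M2: "0 < Mx^2 + 1" using zero_le_power2[of Mx] by linarith
    have lam: "0 < lam" unfolding lam_def using M2 by simp
    have lamM: "lam * Mx^2 / 2 \<le> 1/2"
    proof -
      have "lam * Mx^2 = Mx^2 / (Mx^2 + 1)" unfolding lam_def by simp
      also have "\<dots> \<le> 1" using M2 by (simp add: pos_divide_le_eq)
      finally show ?thesis by simp
    qed
    define mx where "mx = Max (length ` X)"
    define Kn where "Kn = mx + nat \<lceil>k1\<rceil>"
    have mxge: "length x \<le> mx" if "x \<in> X" for x unfolding mx_def using Xfin that by simp
    have Kn1: "1 \<le> Kn"
    proof -
      obtain x where x: "x \<in> X" using Xne by blast
      hence "1 \<le> length x" using XI by (cases x) auto
      thus ?thesis using mxge[OF x] unfolding Kn_def by simp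
    qed
    have key: "real r * (L - lam * Mx^2 / 2) - real (b (r * Kn)) * ln 2 / lam - k2 * real r
               \<le> a * (real r * Q + k3 * real r) + \<alpha>0" if r: "1 \<le> r" for r :: nat
    proof -
      define U where "U xss = a * (\<Sum>i<length xss. OPT V C (s, xss!i)) + (a * k3 * real r + \<alpha>0)" for xss
      define F where "F A xss = C (g (s,xss)) (run_adv A (g (s,xss)))" for A xss
      have ISt: "(s,xss) \<in> I_star I" if xss: "xss \<in> Lr X r" for xss
      proof -
        have "set xss \<subseteq> X" "length xss = r" using xss unfolding Lr_def by auto
        thus ?thesis unfolding I_star_def using XI r by (cases xss) auto
      qed
      have gI': "g (s,xss) \<in> I" if "xss \<in> Lr X r" for xss using gI ISt[OF that] by blast
      have Bnd: "bits_read A (g (s,xss)) \<le> b (r * Kn)"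
        if A: "A \<in> space M" and xss: "set xss \<subseteq> X" "length xss = r" for A xss
      proof -
        have xL: "xss \<in> Lr X r" using xss unfolding Lr_def by simp
        have "real (length (snd (g (s,xss)))) \<le> real (len_star (s,xss)) + k1 * real (length xss)"
          using glen ISt[OF xL] by auto
        also have "real (len_star (s,xss)) \<le> real (length xss * mx)"
        proof -
          have "sum_list (map length xss) \<le> length xss * mx"
            by (rule sum_list_len_le) (use mxge xss(1) in blast)
          thus ?thesis unfolding len_star_def snd_conv by (rule of_nat_mono)
        qed
        also have "k1 * real (length xss) \<le> real (nat \<lceil>k1\<rceil>) * real (length xss)"
          by (intro mult_right_mono) (auto, linarith)
        finally have "real (length (snd (g (s,xss)))) \<le> real (r * Kn)"
          unfolding Kn_def xss(2) by (simp add: algebra_simps)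
        hence len: "length (snd (g (s,xss))) \<le> r * Kn" by linarith
        show ?thesis using advA[OF A] gI'[OF xL] len unfolding adv_alg_def by blast
      qed
      have low: "real r * (L - lam * Mx^2 / 2) - real (b (r * Kn)) * ln 2 / lam - k2 * real r \<le> ExW X q r (F A)"
        if A: "A \<in> space M" for A
        unfolding F_def
        by (rule adv_lower[OF Xfin XI Xne q0 q1 D0 PR bnd lam advA[OF A] G Bnd[OF A] r])
      have Fnn: "0 \<le> F A xss" if A: "A \<in> space M" and xss: "xss \<in> Lr X r" for A xss
      proof -
        have "det_alg I V (ans A (orc A (g (s,xss))))" using advA[OF A] unfolding adv_alg_def by blast
        hence "valid_out V (g (s,xss)) (run_adv A (g (s,xss)))"
          using gI'[OF xss] unfolding det_alg_def run_adv_def by blast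
        thus ?thesis using op gI'[OF xss] unfolding online_problem_def F_def by blast
      qed
      have measF: "(\<lambda>A. F A xss) \<in> borel_measurable M" if xss: "xss \<in> Lr X r" for xss
        unfolding F_def using meas gI'[OF xss] by blast
      have cU: "c1 * OPT V C (g (s,xss)) + \<alpha>0 \<le> U xss" if xss: "xss \<in> Lr X r" for xss
      proof -
        have lx: "length xss = r" and sx: "set xss \<subseteq> X" using xss unfolding Lr_def by auto
        have "OPT V C (g (s,xss)) - k3 * real r \<le> OPT_star V C (s,xss)"
          using G3 ISt[OF xss] lx by auto
        also have "\<dots> \<le> (\<Sum>i<length xss. OPT V C (s, xss!i))"
          by (rule OPT_star_le[OF op fin]) (use sx XI in blast)
        finally have o: "OPT V C (g (s,xss)) \<le> (\<Sum>i<length xss. OPT V C (s, xss!i)) + k3 * real r" by simp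
        show ?thesis
        proof (cases "0 \<le> c1")
          case True
          have "c1 * OPT V C (g (s,xss)) \<le> c1 * ((\<Sum>i<length xss. OPT V C (s, xss!i)) + k3 * real r)"
            by (rule mult_left_mono[OF o True])
          thus ?thesis using True unfolding U_def a_def by (simp add: algebra_simps)
        next
          case False
          have "0 \<le> OPT V C (g (s,xss))" by (rule OPTnn[OF gI'[OF xss]])
          hence "c1 * OPT V C (g (s,xss)) \<le> 0" using False by (simp add: mult_nonpos_nonneg)
          thus ?thesis using False unfolding U_def a_def by simp
        qed
      qed
      have up: "(\<integral>\<^sup>+A. ennreal (F A xss) \<partial>M) \<le> ennreal (U xss)" if xss: "xss \<in> Lr X r" for xss
      proof -
        have "(\<integral>\<^sup>+A. ennreal (F A xss) \<partial>M) = exp_cost C M (g (s,xss))" unfolding F_def exp_cost_def ..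
        also have "\<dots> \<le> ennreal (c1 * OPT V C (g (s,xss)) + \<alpha>0)" using A0 gI'[OF xss] by blast
        also have "\<dots> \<le> ennreal (U xss)" by (rule ennreal_leI[OF cU[OF xss]])
        finally show ?thesis .
      qed
      have Unn: "0 \<le> U xss" if xss: "xss \<in> Lr X r" for xss
        using cU[OF xss] A0 gI'[OF xss] by force
      have "real r * (L - lam * Mx^2 / 2) - real (b (r * Kn)) * ln 2 / lam - k2 * real r \<le> ExW X q r U"
        by (rule exchange[OF PM Xfin q0 low Fnn measF up Unn])
      also have "ExW X q r U = a * (real r * Q) + (a * k3 * real r + \<alpha>0)"
        unfolding U_def Ex_add Ex_cmult Ex_const[OF Xfin q1] Q_def
        using Ex_rounds[OF Xfin q1, of r "\<lambda>x. OPT V C (s,x)"] by simp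
      finally show ?thesis by (simp add: algebra_simps)
    qed
    have fin_ineq: "real r / 2 - real (b (r * Kn)) * ln 2 / lam \<le> K" if r: "1 \<le> r" for r :: nat
    proof -
      have k': "real r * (a * Q + (a * k3 + k2 + 1) - lam * Mx^2 / 2) - real (b (r * Kn)) * ln 2 / lam - k2 * real r
               \<le> a * (real r * Q + k3 * real r) + \<alpha>0"
        using key[OF r] unfolding LQ beta_def .
      have "real r * (1 - lam * Mx^2 / 2) - real (b (r * Kn)) * ln 2 / lam \<le> \<alpha>0"
        using k' by (simp add: algebra_simps)
      moreover have "real r / 2 \<le> real r * (1 - lam * Mx^2 / 2)"
      proof -
        have "real r * (1/2) \<le> real r * (1 - lam * Mx^2 / 2)"
          by (rule mult_left_mono) (use lamM in auto)
        thus ?thesis by simp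
      qed
      moreover have "\<alpha>0 \<le> K" unfolding K_def by simp
      ultimately show ?thesis by linarith
    qed
    define \<delta> where "\<delta> = lam / (4 * ln 2 * real Kn)"
    have \<delta>: "0 < \<delta>" unfolding \<delta>_def using lam Kn1 by simp
    have "eventually (\<lambda>n. norm (real (b n)) \<le> \<delta> * norm (real n)) at_top"
      by (rule landau_o.smallD[OF bo \<delta>])
    then obtain n0 where n0: "\<And>n. n \<ge> n0 \<Longrightarrow> real (b n) \<le> \<delta> * real n"
      unfolding eventually_at_top_linorder by auto
    define r where "r = n0 + nat \<lceil>4 * K\<rceil> + 1"
    have r1: "1 \<le> r" unfolding r_def by simp
    have "r \<le> r * Kn" using Kn1 by simp
    hence "n0 \<le> r * Kn" unfolding r_def by linarith
    hence bb: "real (b (r * Kn)) \<le> \<delta> * real (r * Kn)" by (rule n0)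
    have "real (b (r * Kn)) * ln 2 / lam \<le> \<delta> * real (r * Kn) * ln 2 / lam"
      using bb lam by (intro divide_right_mono mult_right_mono) auto
    also have "\<dots> = real r / 4" unfolding \<delta>_def using lam Kn1 by (simp add: field_simps)
    finally have "real r / 2 - real r / 4 \<le> K" using fin_ineq[OF r1] by linarith
    moreover have "4 * K < real r" unfolding r_def by linarith
    ultimately show False by linarith



  qed
qed
end
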